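(* For every Büchi automaton $\mathcal{A}=(Q,Q_0,\delta,F)$ (deterministic or nondeterministic) over a finite alphabet $\Sigma$ and every bound $n\in\mathbb{N}$, there is a safety automaton $\mathcal{A}'$, which is deterministic if $\mathcal{A}$ is deterministic, with $n\cdot|Q\setminus F|^2+|F|$ states, such that $L(\mathcal{A}')\subseteq L(\mathcal{A})$ and $L_n(L(\mathcal{A}'))=L_n(L(\mathcal{A}))$.
   Context: A lasso of length $n$ is a pair $(u,v)$ with $u\in\Sigma^*$, $v\in\Sigma^+$, $|u\cdot v|=n$, inducing $u\cdot v^\omega$. For $\psi\subseteq\Sigma^\omega$, $L_n(\psi)=\{u\cdot v^\omega \in \psi \mid u\in\Sigma^*, v\in\Sigma^+, |u\cdot v|=n\}$. A nondeterministic Büchi automaton is $(Q,Q_0,\delta,F)$ with finite $Q$, $Q_0\subseteq Q$, $\delta:Q\times\Sigma\to\mathcal{P}(Q)$, $F\subseteq Q$; a run on $\alpha_1\alpha_2\cdots$ is $q_0q_1\cdots$ with $q_0\in Q_0$, $q_{i+1}\in\delta(q_i,\alpha_{i+1})$, accepting if it visits $F$ infinitely often. A safety automaton $(Q,Q_0,\delta)$ accepts a word iff it has an infinite run on it (every infinite run is accepting). An automaton is deterministic if $|Q_0|=1$ and $|\delta(q,\alpha)|\le1$ for all $q,\alpha$ (missing successors allowed). $L(\cdot)$ denotes the accepted language. *)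

theory Defs
  imports Main
begin

text \<open>Infinite words over the alphabet 'a are functions nat => 'a (position 0 is the first letter).
  The finite alphabet Sigma is the finite type 'a.\<close>

definition lasso :: "'a list \<Rightarrow> 'a list \<Rightarrow> (nat \<Rightarrow> 'a)" where
  "lasso u v = (\<lambda>i. if i < length u then u ! i else v ! ((i - length u) mod length v))"

definition lasso_lang :: "nat \<Rightarrow> (nat \<Rightarrow> 'a) set \<Rightarrow> (nat \<Rightarrow> 'a) set" where
  "lasso_lang n \<psi> = {w \<in> \<psi>. \<exists>u v. v \<noteq> [] \<and> length u + length v = n \<and> w = lasso u v}"

record ('q, 'a) nba =
  nba_states :: "'q set"
  nba_init :: "'q set"
  nba_trans :: "'q \<Rightarrow> 'a \<Rightarrow> 'q set"
  nba_acc :: "'q set"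

definition nba_wf :: "('q, 'a) nba \<Rightarrow> bool" where
  "nba_wf A \<longleftrightarrow> finite (nba_states A) \<and> nba_init A \<subseteq> nba_states A
     \<and> (\<forall>q \<in> nba_states A. \<forall>a. nba_trans A q a \<subseteq> nba_states A)
     \<and> nba_acc A \<subseteq> nba_states A"

definition nba_run :: "('q, 'a) nba \<Rightarrow> (nat \<Rightarrow> 'a) \<Rightarrow> (nat \<Rightarrow> 'q) \<Rightarrow> bool" where
  "nba_run A w r \<longleftrightarrow> r 0 \<in> nba_init A \<and> (\<forall>i. r (Suc i) \<in> nba_trans A (r i) (w i))"

definition nba_lang :: "('q, 'a) nba \<Rightarrow> (nat \<Rightarrow> 'a) set" where
  "nba_lang A = {w. \<exists>r. nba_run A w r \<and> (\<exists>\<^sub>\<infinity>i. r i \<in> nba_acc A)}"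

definition nba_det :: "('q, 'a) nba \<Rightarrow> bool" where
  "nba_det A \<longleftrightarrow> card (nba_init A) = 1 \<and> (\<forall>q \<in> nba_states A. \<forall>a. card (nba_trans A q a) \<le> 1)"

record ('q, 'a) sa =
  sa_states :: "'q set"
  sa_init :: "'q set"
  sa_trans :: "'q \<Rightarrow> 'a \<Rightarrow> 'q set"

definition sa_wf :: "('q, 'a) sa \<Rightarrow> bool" where
  "sa_wf A \<longleftrightarrow> finite (sa_states A) \<and> sa_init A \<subseteq> sa_states A
     \<and> (\<forall>q \<in> sa_states A. \<forall>a. sa_trans A q a \<subseteq> sa_states A)"

definition sa_run :: "('q, 'a) sa \<Rightarrow> (nat \<Rightarrow> 'a) \<Rightarrow> (nat \<Rightarrow> 'q) \<Rightarrow> bool" where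
  "sa_run A w r \<longleftrightarrow> r 0 \<in> sa_init A \<and> (\<forall>i. r (Suc i) \<in> sa_trans A (r i) (w i))"

definition sa_lang :: "('q, 'a) sa \<Rightarrow> (nat \<Rightarrow> 'a) set" where
  "sa_lang A = {w. \<exists>r. sa_run A w r}"

definition sa_det :: "('q, 'a) sa \<Rightarrow> bool" where
  "sa_det A \<longleftrightarrow> card (sa_init A) = 1 \<and> (\<forall>q \<in> sa_states A. \<forall>a. card (sa_trans A q a) \<le> 1)"

end

theory Submission imports Defs "HOL-Library.Infinite_Set" begin


definition ipath :: "('v \<Rightarrow> 'v \<Rightarrow> bool) \<Rightarrow> 'v \<Rightarrow> (nat \<Rightarrow> 'v) \<Rightarrow> bool" where
  "ipath E x f \<longleftrightarrow> f 0 = x \<and> (\<forall>i. E (f i) (f (Suc i)))"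

definition good :: "('v \<Rightarrow> 'v \<Rightarrow> bool) \<Rightarrow> 'v set \<Rightarrow> 'v \<Rightarrow> bool" where
  "good E T x \<longleftrightarrow> (\<exists>f. ipath E x f \<and> (\<forall>i. \<exists>j\<ge>i. f j \<in> T))"

lemma good_shift:
  assumes "ipath E x f" "\<forall>i. \<exists>j\<ge>i. f j \<in> T"
  shows "good E T (f k)"
proof -
  have "ipath E (f k) (\<lambda>j. f (k + j))" using assms(1) unfolding ipath_def by simp
  moreover have "\<forall>i. \<exists>j\<ge>i. f (k + j) \<in> T"
  proof
    fix i
    obtain j where "j \<ge> k + i" "f j \<in> T" using assms(2) by blast
    then show "\<exists>j\<ge>i. f (k + j) \<in> T" by (intro exI[of _ "j - k"]) auto
  qed
  ultimately show ?thesis unfolding good_def by blast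
qed

lemma good_succ:
  assumes "good E T x" shows "\<exists>y. E x y \<and> good E T y"
proof -
  obtain f where f: "ipath E x f" "\<forall>i. \<exists>j\<ge>i. f j \<in> T" using assms unfolding good_def by blast
  have "E x (f 1)" using f(1) unfolding ipath_def by (metis One_nat_def)
  moreover have "good E T (f 1)" using good_shift[OF f] .
  ultimately show ?thesis by blast
qed

lemma ipath_pow: "ipath E x f \<Longrightarrow> (E ^^ j) x (f j)"
proof (induction j)
  case 0 then show ?case unfolding ipath_def by simp
next
  case (Suc j) then show ?case unfolding ipath_def by (metis relpowp_Suc_I)
qed

lemma good_reach:
  assumes "good E T x" shows "\<exists>k y. (E ^^ k) x y \<and> y \<in> T \<and> good E T y"
proof -
  obtain f where f: "ipath E x f" "\<forall>i. \<exists>j\<ge>i. f j \<in> T" using assms unfolding good_def by blast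
  obtain j where "f j \<in> T" using f(2) by blast
  then show ?thesis using ipath_pow[OF f(1)] good_shift[OF f] by blast
qed

lemma good_back:
  assumes "E x y" "good E T y" shows "good E T x"
proof -
  obtain f where f: "ipath E y f" "\<forall>i. \<exists>j\<ge>i. f j \<in> T" using assms(2) unfolding good_def by blast
  define g where "g j = (case j of 0 \<Rightarrow> x | Suc j' \<Rightarrow> f j')" for j
  have "ipath E x g" using f(1) assms(1) unfolding ipath_def g_def
    by (auto split: nat.splits)
  moreover have "\<forall>i. \<exists>j\<ge>i. g j \<in> T"
  proof
    fix i
    obtain j where "j \<ge> i" "f j \<in> T" using f(2) by blast
    then show "\<exists>j\<ge>i. g j \<in> T" by (intro exI[of _ "Suc j"]) (auto simp: g_def)
  qed
  ultimately show ?thesis unfolding good_def by blast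
qed

lemma good_back_pow: "(E ^^ k) x y \<Longrightarrow> good E T y \<Longrightarrow> good E T x"
proof (induction k arbitrary: x)
  case 0 then show ?case by (auto elim: relpowp_0_E)
next
  case (Suc k)
  then obtain z where "E x z" "(E ^^ k) z y" using relpowp_Suc_D2 by metis
  then show ?case using Suc good_back by metis
qed

definition gdist :: "('v \<Rightarrow> 'v \<Rightarrow> bool) \<Rightarrow> 'v set \<Rightarrow> 'v \<Rightarrow> nat" where
  "gdist E T x = (LEAST k. \<exists>y. (E ^^ k) x y \<and> y \<in> T \<and> good E T y)"

lemma good_dec:
  assumes "good E T x" "x \<notin> T"
  shows "\<exists>y. E x y \<and> good E T y \<and> gdist E T y < gdist E T x"
proof -
  let ?P = "\<lambda>x k. \<exists>y. (E ^^ k) x y \<and> y \<in> T \<and> good E T y"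
  have "\<exists>k. ?P x k" using good_reach[OF assms(1)] by blast
  then have P: "?P x (gdist E T x)" unfolding gdist_def by (rule LeastI_ex)
  then obtain y where y: "(E ^^ gdist E T x) x y" "y \<in> T" "good E T y" by blast
  show ?thesis
  proof (cases "gdist E T x")
    case 0
    then show ?thesis using y assms(2) by (auto elim: relpowp_0_E)
  next
    case (Suc k)
    then obtain z where z: "E x z" "(E ^^ k) z y" using y(1) relpowp_Suc_D2 by metis
    have "?P z k" using z y by blast
    then have "gdist E T z \<le> k" unfolding gdist_def by (rule Least_le)
    moreover have "good E T z" using good_back_pow[OF z(2) y(3)] .
    ultimately show ?thesis using z Suc by (intro exI[of _ z]) auto
  qed
qed

lemma chain_dec:
  fixes h :: "nat \<Rightarrow> nat"
  assumes "\<And>k. k < K \<Longrightarrow> h (Suc k) < h k"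
  shows "k < l \<Longrightarrow> l \<le> K \<Longrightarrow> h l < h k"
proof (induction l)
  case 0 then show ?case by simp
next
  case (Suc l)
  then show ?case using assms[of l] by (cases "k = l") auto
qed

lemma graph_window:
  assumes fin: "finite V" and EV: "\<And>x y. E x y \<Longrightarrow> y \<in> V" and x0: "x0 \<in> V"
    and g: "good E T x0"
  shows "\<exists>p. ipath E x0 p \<and> (\<forall>i. \<exists>k\<le>card (V - T). p (i+k) \<in> T)"
proof -
  define nx where "nx x = (SOME y. E x y \<and> good E T y \<and> (x \<notin> T \<longrightarrow> gdist E T y < gdist E T x))" for x
  have nx: "E x (nx x) \<and> good E T (nx x) \<and> (x \<notin> T \<longrightarrow> gdist E T (nx x) < gdist E T x)"
    if "good E T x" for x
  proof (cases "x \<in> T")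
    case True
    then have "\<exists>y. E x y \<and> good E T y \<and> (x \<notin> T \<longrightarrow> gdist E T y < gdist E T x)"
      using good_succ[OF that] by blast
    then show ?thesis unfolding nx_def by (rule someI_ex)
  next
    case False
    then have "\<exists>y. E x y \<and> good E T y \<and> (x \<notin> T \<longrightarrow> gdist E T y < gdist E T x)"
      using good_dec[OF that] by blast
    then show ?thesis unfolding nx_def by (rule someI_ex)
  qed
  define p where "p i = (nx ^^ i) x0" for i
  have pg: "good E T (p i)" for i
    by (induction i) (auto simp: p_def g nx)
  have pE: "E (p i) (nx (p i))" "p (Suc i) = nx (p i)" for i
    using nx[OF pg[of i]] by (auto simp: p_def)
  have pV: "p i \<in> V" for i
    using EV[OF pE(1)] pE(2) x0 by (cases i) (auto simp: p_def)
  have ip: "ipath E x0 p" unfolding ipath_def using pE by (simp add: p_def)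
  have "\<exists>k\<le>card (V - T). p (i+k) \<in> T" for i
  proof (rule ccontr)
    let ?K = "card (V - T)"
    assume "\<not> ?thesis"
    then have nT: "\<And>k. k \<le> ?K \<Longrightarrow> p (i+k) \<notin> T" by blast
    have dec: "gdist E T (p (i + Suc k)) < gdist E T (p (i+k))" if "k < ?K" for k
      using nx[OF pg[of "i+k"]] nT[of k] that pE(2)[of "i+k"] by simp
    have dd: "gdist E T (p (i + l)) < gdist E T (p (i+k))" if "k < l" "l \<le> ?K" for k l
      using chain_dec[of ?K "\<lambda>k. gdist E T (p (i+k))", OF dec] that by blast
    have inj: "inj_on (\<lambda>k. p (i+k)) {0..?K}"
    proof (rule inj_onI)
      fix k l assume "k \<in> {0..?K}" "l \<in> {0..?K}" "p (i+k) = p (i+l)"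
      then show "k = l" using dd[of k l] dd[of l k] by (metis atLeastAtMost_iff less_irrefl linorder_neq_iff)
    qed
    have sub: "(\<lambda>k. p (i+k)) ` {0..?K} \<subseteq> V - T" using pV nT by auto
    have "card ((\<lambda>k. p (i+k)) ` {0..?K}) = Suc ?K" using card_image[OF inj] by simp
    moreover have "card ((\<lambda>k. p (i+k)) ` {0..?K}) \<le> ?K"
      using card_mono[OF _ sub] fin by simp
    ultimately show False by simp
  qed
  then show ?thesis using ip by blast
qed



lemma lasso_good_run:
  fixes A :: "('q, 'a) nba"
  assumes wf: "nba_wf A" and v: "v \<noteq> []" and len: "length u + length v = n"
    and w: "lasso u v \<in> nba_lang A"
  shows "\<exists>r. nba_run A (lasso u v) r \<and>
     (\<forall>i. \<exists>k\<le>n * card (nba_states A - nba_acc A). r (i+k) \<in> nba_acc A)"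
proof -
  define W where "W = lasso u v"
  let ?Q = "nba_states A" and ?F = "nba_acc A" and ?d = "nba_trans A"
  obtain r where run: "nba_run A W r" and inf: "\<exists>\<^sub>\<infinity>i. r i \<in> ?F"
    using w unfolding nba_lang_def W_def by blast
  have rQ: "r i \<in> ?Q" for i
  proof (induction i)
    case 0 then show ?case using run wf unfolding nba_run_def nba_wf_def by blast
  next
    case (Suc i) then show ?case using run wf unfolding nba_run_def nba_wf_def by blast
  qed
  define pos where "pos i = (if i < length u then i else length u + (i - length u) mod length v)" for i
  define nxt where "nxt p = (if Suc p < n then Suc p else length u)" for p
  have lv: "length v > 0" using v by simp
  have pos_lt: "pos i < n" for i
    using len lv by (auto simp: pos_def)
  have pos_w: "W (pos i) = W i" for i
    by (auto simp: pos_def W_def lasso_def)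
  have pos0: "pos 0 = 0" by (simp add: pos_def)
  have pos_Suc: "pos (Suc i) = nxt (pos i)" for i
  proof (cases "i < length u")
    case True then show ?thesis using len lv by (auto simp: pos_def nxt_def)
  next
    case False
    then have e: "Suc i - length u = Suc (i - length u)" by simp
    have "(i - length u) mod length v < length v" using lv by simp
    then have "Suc ((i - length u) mod length v) < length v \<longleftrightarrow> Suc ((i - length u) mod length v) \<noteq> length v" by linarith
    then show ?thesis using False len lv unfolding pos_def nxt_def e mod_Suc
      by (auto simp: less_Suc_eq)
  qed
  define E where "E x y \<longleftrightarrow> fst x < n \<and> snd x \<in> ?Q \<and> fst y = nxt (fst x) \<and> snd y \<in> ?d (snd x) (W (fst x))"
    for x y :: "nat \<times> 'q"
  define V where "V = {0..<n} \<times> ?Q"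
  define T where "T = {0..<n} \<times> ?F"
  have finV: "finite V" using wf unfolding V_def nba_wf_def by simp
  have EV: "y \<in> V" if "E x y" for x y
  proof -
    have "fst y < n" using that len lv unfolding E_def nxt_def by auto
    moreover have "snd y \<in> ?Q" using that wf unfolding E_def nba_wf_def by blast
    ultimately show ?thesis unfolding V_def by (cases y) auto
  qed
  have x0V: "(0, r 0) \<in> V" using rQ len lv unfolding V_def by auto
  have gd: "good E T (0, r 0)"
  proof -
    define f where "f i = (pos i, r i)" for i
    have "ipath E (0, r 0) f" unfolding ipath_def f_def E_def
      using pos0 pos_lt pos_Suc pos_w rQ run unfolding nba_run_def by auto
    moreover have "\<forall>i. \<exists>j\<ge>i. f j \<in> T"
      using inf unfolding INFM_nat_le f_def T_def using pos_lt by auto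
    ultimately show ?thesis unfolding good_def by blast
  qed
  have cardVT: "card (V - T) = n * card (?Q - ?F)"
  proof -
    have "V - T = {0..<n} \<times> (?Q - ?F)" unfolding V_def T_def by auto
    then show ?thesis by (simp add: card_cartesian_product)
  qed
  have "\<exists>p. ipath E (0, r 0) p \<and> (\<forall>i. \<exists>k\<le>card (V - T). p (i+k) \<in> T)"
  proof (rule graph_window)
    show "finite V" by (rule finV)
    show "(0, r 0) \<in> V" by (rule x0V)
    show "good E T (0, r 0)" by (rule gd)
    show "y \<in> V" if "E x y" for x y using EV that by blast
  qed
  then obtain p where ip: "ipath E (0, r 0) p" and win: "\<forall>i. \<exists>k\<le>card (V - T). p (i+k) \<in> T"
    by blast
  have pfst: "fst (p i) = pos i" for i
  proof (induction i)
    case 0 then show ?case using ip pos0 unfolding ipath_def by simp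
  next
    case (Suc i) then show ?case using ip pos_Suc unfolding ipath_def E_def by metis
  qed
  define r' where "r' i = snd (p i)" for i
  have "nba_run A W r'"
    unfolding nba_run_def
  proof
    show "r' 0 \<in> nba_init A" using ip run unfolding r'_def ipath_def nba_run_def by simp
    show "\<forall>i. r' (Suc i) \<in> ?d (r' i) (W i)"
    proof
      fix i
      have "E (p i) (p (Suc i))" using ip unfolding ipath_def by blast
      then show "r' (Suc i) \<in> ?d (r' i) (W i)" unfolding E_def r'_def using pfst[of i] pos_w[of i] by simp
    qed
  qed
  moreover have "\<forall>i. \<exists>k\<le>n * card (?Q - ?F). r' (i+k) \<in> ?F"
  proof
    fix i
    obtain k where "k \<le> card (V - T)" "p (i+k) \<in> T" using win by blast
    then show "\<exists>k\<le>n * card (?Q - ?F). r' (i+k) \<in> ?F"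
      using cardVT unfolding r'_def by (intro exI[of _ k]) (auto simp: T_def)
  qed
  ultimately show ?thesis unfolding W_def by blast
qed



lemma sa_to_nat:
  fixes B :: "('s, 'a) sa"
  assumes wf: "sa_wf B"
  shows "\<exists>A' :: (nat, 'a) sa. sa_wf A' \<and> card (sa_states A') = card (sa_states B)
          \<and> (sa_det B \<longrightarrow> sa_det A') \<and> sa_lang A' = sa_lang B"
proof -
  let ?S = "sa_states B"
  have fin: "finite ?S" using wf unfolding sa_wf_def by blast
  have iS: "sa_init B \<subseteq> ?S" using wf unfolding sa_wf_def by blast
  have tS: "sa_trans B x a \<subseteq> ?S" if "x \<in> ?S" for x a using wf that unfolding sa_wf_def by blast
  obtain h where h: "bij_betw h ?S {0..<card ?S}" using ex_bij_betw_finite_nat[OF fin] by blast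
  have inj: "inj_on h ?S" using h bij_betw_imp_inj_on by blast
  define h' where "h' = inv_into ?S h"
  have hh: "h' (h x) = x" if "x \<in> ?S" for x unfolding h'_def using inj that by simp
  have h'S: "h' p \<in> ?S" if "p \<in> h ` ?S" for p unfolding h'_def using that by (rule inv_into_into)
  define A' :: "(nat, 'a) sa" where "A' = \<lparr>sa_states = h ` ?S, sa_init = h ` sa_init B,
     sa_trans = (\<lambda>p a. if p \<in> h ` ?S then h ` sa_trans B (h' p) a else {})\<rparr>"
  have "sa_wf A'" unfolding sa_wf_def A'_def
  proof (intro conjI ballI allI)
    show "finite (sa_states \<lparr>sa_states = h ` ?S, sa_init = h ` sa_init B,
     sa_trans = (\<lambda>p a. if p \<in> h ` ?S then h ` sa_trans B (h' p) a else {})\<rparr>)" using fin by simp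
    show "sa_init \<lparr>sa_states = h ` ?S, sa_init = h ` sa_init B,
     sa_trans = (\<lambda>p a. if p \<in> h ` ?S then h ` sa_trans B (h' p) a else {})\<rparr> \<subseteq> sa_states \<lparr>sa_states = h ` ?S, sa_init = h ` sa_init B,
     sa_trans = (\<lambda>p a. if p \<in> h ` ?S then h ` sa_trans B (h' p) a else {})\<rparr>" using iS by (simp add: image_mono)
    fix q a assume q: "q \<in> sa_states \<lparr>sa_states = h ` ?S, sa_init = h ` sa_init B,
     sa_trans = (\<lambda>p a. if p \<in> h ` ?S then h ` sa_trans B (h' p) a else {})\<rparr>"
    then have "q \<in> h ` ?S" by simp
    then show "sa_trans \<lparr>sa_states = h ` ?S, sa_init = h ` sa_init B,
     sa_trans = (\<lambda>p a. if p \<in> h ` ?S then h ` sa_trans B (h' p) a else {})\<rparr> q a \<subseteq> sa_states \<lparr>sa_states = h ` ?S, sa_init = h ` sa_init B,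
     sa_trans = (\<lambda>p a. if p \<in> h ` ?S then h ` sa_trans B (h' p) a else {})\<rparr>"
      using tS[OF h'S] by (simp add: image_mono)
  qed
  moreover have "card (sa_states A') = card ?S" unfolding A'_def using card_image[OF inj] by simp
  moreover have "sa_det B \<longrightarrow> sa_det A'"
  proof
    assume d: "sa_det B"
    have "card (h ` sa_init B) = card (sa_init B)"
      using card_image[OF inj_on_subset[OF inj iS]] .
    moreover have "card (h ` sa_trans B (h' p) a) \<le> 1" if "p \<in> h ` ?S" for p a
    proof -
      have "finite (sa_trans B (h' p) a)" using tS[OF h'S[OF that]] fin finite_subset by blast
      then have "card (h ` sa_trans B (h' p) a) \<le> card (sa_trans B (h' p) a)" by (rule card_image_le)
      also have "\<dots> \<le> 1" using d h'S[OF that] unfolding sa_det_def by blast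
      finally show ?thesis .
    qed
    ultimately show "sa_det A'" using d unfolding sa_det_def A'_def by auto
  qed
  moreover have "sa_lang A' = sa_lang B"
  proof
    show "sa_lang B \<subseteq> sa_lang A'"
    proof
      fix w assume "w \<in> sa_lang B"
      then obtain r where r: "sa_run B w r" unfolding sa_lang_def by blast
      have r0: "r 0 \<in> sa_init B" and rs: "\<And>i. r (Suc i) \<in> sa_trans B (r i) (w i)"
        using r unfolding sa_run_def by auto
      have rS: "r i \<in> ?S" for i
      proof (induction i)
        case 0 then show ?case using r0 iS by blast
      next
        case (Suc i) then show ?case using rs[of i] tS by blast
      qed
      have "sa_run A' w (h \<circ> r)" unfolding sa_run_def A'_def
        using r0 rs rS hh by simp
      then show "w \<in> sa_lang A'" unfolding sa_lang_def by blast
    qed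
  next
    show "sa_lang A' \<subseteq> sa_lang B"
    proof
      fix w assume "w \<in> sa_lang A'"
      then obtain r where r: "sa_run A' w r" unfolding sa_lang_def by blast
      have r0: "r 0 \<in> h ` sa_init B" and rs: "\<And>i. r (Suc i) \<in> (if r i \<in> h ` ?S then h ` sa_trans B (h' (r i)) (w i) else {})"
        using r unfolding sa_run_def A'_def by auto
      have rS: "r i \<in> h ` ?S" for i
      proof (cases i)
        case 0 then show ?thesis using r0 iS by auto
      next
        case (Suc j)
        have "r (Suc j) \<in> h ` ?S" using rs[of j] tS h'S by (fastforce split: if_splits)
        then show ?thesis using Suc by simp
      qed
      have "sa_run B w (h' \<circ> r)" unfolding sa_run_def
      proof
        show "(h' \<circ> r) 0 \<in> sa_init B" using r0 iS hh by auto
        show "\<forall>i. (h' \<circ> r) (Suc i) \<in> sa_trans B ((h' \<circ> r) i) (w i)"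
        proof
          fix i
          obtain y where "y \<in> sa_trans B (h' (r i)) (w i)" "r (Suc i) = h y"
            using rs[of i] rS[of i] by auto
          moreover have "y \<in> ?S" using calculation(1) tS h'S rS by blast
          ultimately show "(h' \<circ> r) (Suc i) \<in> sa_trans B ((h' \<circ> r) i) (w i)" using hh by simp
        qed
      qed
      then show "w \<in> sa_lang B" unfolding sa_lang_def by blast
    qed
  qed
  ultimately show ?thesis by blast
qed



theorem theorem3:
  fixes A :: "('q, 'a::finite) nba" and n :: nat
  assumes "nba_wf A" and "n \<ge> 1"
  shows "\<exists>A' :: (nat, 'a) sa.
           sa_wf A'
         \<and> card (sa_states A') = n * card (nba_states A - nba_acc A) ^ 2 + card (nba_acc A)
         \<and> (nba_det A \<longrightarrow> sa_det A')
         \<and> sa_lang A' \<subseteq> nba_lang A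
         \<and> lasso_lang n (sa_lang A') = lasso_lang n (nba_lang A)"
proof -
  note wf = assms(1)
  let ?Q = "nba_states A" and ?F = "nba_acc A" and ?d = "nba_trans A" and ?I = "nba_init A"
  define m where "m = card (?Q - ?F)"
  define N where "N = n * m"
  have finQ: "finite ?Q" and IQ: "?I \<subseteq> ?Q" and dQ: "\<And>q a. q \<in> ?Q \<Longrightarrow> ?d q a \<subseteq> ?Q"
    and FQ: "?F \<subseteq> ?Q"
    using wf unfolding nba_wf_def by blast+
  have N1: "1 \<le> N" if "q \<in> ?Q" "q \<notin> ?F" for q
  proof -
    have "m \<noteq> 0" unfolding m_def using that finQ by auto
    then show ?thesis unfolding N_def using assms(2) by simp
  qed
  define g where "g c q = (if q \<in> ?F then (q, 0::nat) else (q, Suc c))" for c q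
  have ginj: "inj (g c)" for c by (rule injI) (auto simp: g_def split: if_splits)
  define SB where "SB = (\<lambda>q. (q, 0::nat)) ` ?F \<union> (?Q - ?F) \<times> {1..N}"
  define B :: "('q \<times> nat, 'a) sa" where "B = \<lparr>sa_states = SB,
     sa_init = g 0 ` {q \<in> ?I. q \<in> ?F \<or> 1 \<le> N},
     sa_trans = (\<lambda>s a. g (snd s) ` {q' \<in> ?d (fst s) a. q' \<in> ?F \<or> Suc (snd s) \<le> N})\<rparr>"
  have B_simps: "sa_states B = SB" "sa_init B = g 0 ` {q \<in> ?I. q \<in> ?F \<or> 1 \<le> N}"
     "sa_trans B s a = g (snd s) ` {q' \<in> ?d (fst s) a. q' \<in> ?F \<or> Suc (snd s) \<le> N}" for s a
    unfolding B_def by simp_all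
  have SB_fst: "fst s \<in> ?Q" if "s \<in> SB" for s using that FQ unfolding SB_def by auto
  have gSB: "g c q \<in> SB" if "q \<in> ?Q" "q \<in> ?F \<or> Suc c \<le> N" for c q
    using that unfolding g_def SB_def by auto
  have wfB: "sa_wf B" unfolding sa_wf_def B_simps
  proof (intro conjI ballI allI)
    show "finite SB" unfolding SB_def using finQ finite_subset[OF FQ finQ] by simp
    show "g 0 ` {q \<in> ?I. q \<in> ?F \<or> 1 \<le> N} \<subseteq> SB" using IQ gSB by auto
    fix s a assume "s \<in> SB"
    then show "g (snd s) ` {q' \<in> ?d (fst s) a. q' \<in> ?F \<or> Suc (snd s) \<le> N} \<subseteq> SB"
      using gSB dQ[OF SB_fst] by blast
  qed
  have cardB: "card (sa_states B) = n * card (?Q - ?F) ^ 2 + card ?F"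
  proof -
    have "card SB = card ((\<lambda>q. (q, 0::nat)) ` ?F) + card ((?Q - ?F) \<times> {1..N})"
      unfolding SB_def
      by (rule card_Un_disjoint) (use finQ FQ finite_subset in auto)
    also have "\<dots> = card ?F + m * N"
      by (simp add: card_image inj_on_def card_cartesian_product m_def)
    finally show ?thesis unfolding B_simps N_def m_def power2_eq_square by simp
  qed
  have detB: "nba_det A \<longrightarrow> sa_det B"
  proof
    assume d: "nba_det A"
    then obtain q0 where q0: "?I = {q0}" unfolding nba_det_def using card_1_singletonE by blast
    then have "q0 \<in> ?Q" using IQ by auto
    then have "{q \<in> ?I. q \<in> ?F \<or> 1 \<le> N} = ?I" using q0 N1 by auto
    then have c1: "card (sa_init B) = 1" unfolding B_simps
      using card_image[OF inj_on_subset[OF ginj subset_UNIV]] d unfolding nba_det_def by simp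
    have "card (sa_trans B s a) \<le> 1" if "s \<in> SB" for s a
    proof -
      have fq: "fst s \<in> ?Q" using SB_fst[OF that] .
      have fin: "finite (?d (fst s) a)" using dQ[OF fq] finQ finite_subset by blast
      have "card (sa_trans B s a) \<le> card {q' \<in> ?d (fst s) a. q' \<in> ?F \<or> Suc (snd s) \<le> N}"
        unfolding B_simps by (rule card_image_le) (use fin in simp)
      also have "\<dots> \<le> card (?d (fst s) a)" by (rule card_mono[OF fin]) auto
      also have "\<dots> \<le> 1" using d fq unfolding nba_det_def by blast
      finally show ?thesis .
    qed
    then show "sa_det B" unfolding sa_det_def using c1 B_simps by simp
  qed
  have subB: "sa_lang B \<subseteq> nba_lang A"
  proof
    fix w assume "w \<in> sa_lang B"
    then obtain r where r: "sa_run B w r" unfolding sa_lang_def by blast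
    have r0: "r 0 \<in> g 0 ` {q \<in> ?I. q \<in> ?F \<or> 1 \<le> N}"
      and rs: "\<And>i. r (Suc i) \<in> g (snd (r i)) ` {q' \<in> ?d (fst (r i)) (w i). q' \<in> ?F \<or> Suc (snd (r i)) \<le> N}"
      using r unfolding sa_run_def B_simps by auto
    have run: "nba_run A w (fst \<circ> r)" unfolding nba_run_def
    proof
      show "(fst \<circ> r) 0 \<in> ?I" using r0 by (auto simp: g_def)
      show "\<forall>i. (fst \<circ> r) (Suc i) \<in> ?d ((fst \<circ> r) i) (w i)"
      proof
        fix i
        obtain q' where "q' \<in> ?d (fst (r i)) (w i)" "r (Suc i) = g (snd (r i)) q'" using rs[of i] by blast
        then show "(fst \<circ> r) (Suc i) \<in> ?d ((fst \<circ> r) i) (w i)" by (simp add: g_def)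
      qed
    qed
    have inv: "fst (r i) \<notin> ?F \<longrightarrow> 1 \<le> snd (r i) \<and> snd (r i) \<le> N" for i
    proof (cases i)
      case 0 then show ?thesis using r0 by (auto simp: g_def)
    next
      case (Suc j) then show ?thesis using rs[of j] by (auto simp: g_def)
    qed
    have step: "fst (r (Suc i)) \<notin> ?F \<Longrightarrow> snd (r (Suc i)) = Suc (snd (r i))" for i
      using rs[of i] by (auto simp: g_def)
    have win: "\<exists>k\<le>N. fst (r (i+k)) \<in> ?F" for i
    proof (rule ccontr)
      assume "\<not> ?thesis"
      then have nF: "\<And>k. k \<le> N \<Longrightarrow> fst (r (i+k)) \<notin> ?F" by blast
      have "k \<le> N \<Longrightarrow> Suc k \<le> snd (r (i+k))" for k
      proof (induction k)
        case 0 then show ?case using inv[of i] nF[of 0] by simp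
      next
        case (Suc k) then show ?case using step[of "i+k"] nF[of "Suc k"] by simp
      qed
      then have "Suc N \<le> snd (r (i+N))" by simp
      then show False using inv[of "i+N"] nF[of N] by simp
    qed
    have "\<exists>\<^sub>\<infinity>i. (fst \<circ> r) i \<in> ?F" unfolding INFM_nat_le
    proof
      fix i obtain k where "fst (r (i+k)) \<in> ?F" using win by blast
      then show "\<exists>j\<ge>i. (fst \<circ> r) j \<in> ?F" by (intro exI[of _ "i+k"]) simp
    qed
    then show "w \<in> nba_lang A" using run unfolding nba_lang_def by blast
  qed
  have supB: "w \<in> sa_lang B" if "w \<in> lasso_lang n (nba_lang A)" for w
  proof -
    have "w \<in> nba_lang A \<and> (\<exists>u v. v \<noteq> [] \<and> length u + length v = n \<and> w = lasso u v)"
      using that unfolding lasso_lang_def by (rule CollectD)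
    then obtain u v where uv: "v \<noteq> []" "length u + length v = n" "w = lasso u v" and wA: "w \<in> nba_lang A"
      by blast
    have wl: "lasso u v \<in> nba_lang A" using wA unfolding uv(3) .
    obtain r where run0: "nba_run A (lasso u v) r" and win0: "\<forall>i. \<exists>k\<le>n * card (?Q - ?F). r (i+k) \<in> ?F"
      using lasso_good_run[OF wf uv(1,2) wl] by blast
    have run: "nba_run A w r" using run0 unfolding uv(3) .
    have win: "\<forall>i. \<exists>k\<le>N. r (i+k) \<in> ?F" using win0 unfolding N_def m_def .
    define cnt where "cnt i = rec_nat (if r 0 \<in> ?F then 0 else 1)
       (\<lambda>j c. if r (Suc j) \<in> ?F then 0 else Suc c) i" for i
    have cnt0: "cnt 0 = (if r 0 \<in> ?F then 0 else 1)" unfolding cnt_def by simp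
    have cntS: "cnt (Suc i) = (if r (Suc i) \<in> ?F then 0 else Suc (cnt i))" for i
      unfolding cnt_def by simp
    have bk: "\<forall>k. k \<le> cnt i \<longrightarrow> k \<le> Suc i \<and> (\<forall>j<k. r (i - j) \<notin> ?F)" for i
    proof (induction i)
      case 0
      show ?case
      proof (intro allI impI)
        fix k assume "k \<le> cnt 0"
        then have "k \<le> 1" "k = 1 \<Longrightarrow> r 0 \<notin> ?F" using cnt0 by (auto split: if_splits)
        then show "k \<le> Suc 0 \<and> (\<forall>j<k. r (0 - j) \<notin> ?F)" by auto
      qed
    next
      case (Suc i)
      show ?case
      proof (intro allI impI)
        fix k assume k: "k \<le> cnt (Suc i)"
        show "k \<le> Suc (Suc i) \<and> (\<forall>j<k. r (Suc i - j) \<notin> ?F)"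
        proof (cases "r (Suc i) \<in> ?F")
          case True then show ?thesis using k cntS[of i] by simp
        next
          case False
          then have ck: "cnt (Suc i) = Suc (cnt i)" using cntS[of i] by simp
          show ?thesis
          proof (cases k)
            case 0 then show ?thesis by simp
          next
            case (Suc k')
            then have "k' \<le> cnt i" using k ck by simp
            then have h: "k' \<le> Suc i" "\<forall>j<k'. r (i - j) \<notin> ?F" using Suc.IH by blast+
            have "\<forall>j<k. r (Suc i - j) \<notin> ?F"
            proof (intro allI impI)
              fix j assume "j < k"
              show "r (Suc i - j) \<notin> ?F"
              proof (cases j)
                case 0 then show ?thesis using False by simp
              next
                case (Suc j') then show ?thesis using h(2) \<open>j < k\<close> \<open>k = Suc k'\<close> by simp
              qed
            qed
            then show ?thesis using h(1) Suc by simp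
          qed
        qed
      qed
    qed
    have cntN: "cnt i \<le> N" for i
    proof (rule ccontr)
      assume "\<not> cnt i \<le> N"
      then have "Suc N \<le> cnt i" by simp
      then have b: "Suc N \<le> Suc i" "\<forall>j<Suc N. r (i - j) \<notin> ?F" using bk[of i] by blast+
      obtain k where k: "k \<le> N" "r (i - N + k) \<in> ?F" using win by blast
      have e: "i - N + k = i - (N - k)" using b(1) k(1) by simp
      have "N - k < Suc N" by simp
      then have "r (i - (N - k)) \<notin> ?F" using b(2) by blast
      then show False using k(2) e by simp
    qed
    define r' where "r' i = (r i, cnt i)" for i
    have "sa_run B w r'" unfolding sa_run_def B_simps
    proof
      have "r 0 \<in> ?F \<or> 1 \<le> N" using cntN[of 0] cnt0 by (auto split: if_splits)
      moreover have "r' 0 = g 0 (r 0)" unfolding r'_def g_def using cnt0 by simp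
      ultimately show "r' 0 \<in> g 0 ` {q \<in> ?I. q \<in> ?F \<or> 1 \<le> N}"
        using run unfolding nba_run_def by blast
      show "\<forall>i. r' (Suc i) \<in> g (snd (r' i)) ` {q' \<in> ?d (fst (r' i)) (w i). q' \<in> ?F \<or> Suc (snd (r' i)) \<le> N}"
      proof
        fix i
        have "r (Suc i) \<in> ?F \<or> Suc (cnt i) \<le> N" using cntN[of "Suc i"] cntS[of i] by (auto split: if_splits)
        moreover have "r' (Suc i) = g (cnt i) (r (Suc i))" unfolding r'_def g_def using cntS[of i] by simp
        moreover have "r (Suc i) \<in> ?d (r i) (w i)" using run unfolding nba_run_def by blast
        ultimately show "r' (Suc i) \<in> g (snd (r' i)) ` {q' \<in> ?d (fst (r' i)) (w i). q' \<in> ?F \<or> Suc (snd (r' i)) \<le> N}"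
          unfolding r'_def by simp
      qed
    qed
    then show ?thesis unfolding sa_lang_def by blast
  qed
  obtain A' :: "(nat, 'a) sa" where A': "sa_wf A'" "card (sa_states A') = card (sa_states B)"
    "sa_det B \<longrightarrow> sa_det A'" "sa_lang A' = sa_lang B"
    using sa_to_nat[OF wfB] by blast
  have "lasso_lang n (sa_lang A') = lasso_lang n (nba_lang A)"
  proof
    show "lasso_lang n (sa_lang A') \<subseteq> lasso_lang n (nba_lang A)"
      using subB A'(4) unfolding lasso_lang_def by blast
    show "lasso_lang n (nba_lang A) \<subseteq> lasso_lang n (sa_lang A')"
    proof
      fix w assume w: "w \<in> lasso_lang n (nba_lang A)"
      then have "w \<in> sa_lang A'" using supB A'(4) by blast
      then show "w \<in> lasso_lang n (sa_lang A')" using w unfolding lasso_lang_def by blast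
    qed
  qed
  moreover have "sa_lang A' \<subseteq> nba_lang A" using A'(4) subB by simp
  moreover have "card (sa_states A') = n * card (?Q - ?F) ^ 2 + card ?F" using A'(2) cardB by simp
  moreover have "nba_det A \<longrightarrow> sa_det A'" using A'(3) detB by blast
  ultimately show ?thesis using A'(1) by blast
qed

end
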